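(* Let $\mathbf X\in\mathbb R^{n\times p}$ be a fixed matrix with $p<n$, let $\mathbf P$ be the orthogonal projection onto its column space, and let $\mathbf X_{\mathrm{all}}\in\mathbb R^{n\times p_{\mathrm{all}}}$ be a fixed matrix. Suppose $\mathbf y=\mathbf X\boldsymbol\beta+\sigma\boldsymbol\varepsilon$ with $\boldsymbol\beta\in\mathbb R^p$, $\sigma>0$ and $\boldsymbol\varepsilon\sim\mathcal N_n(\mathbf 0,\mathbf I)$ (the null hypothesis). Let $\hat{\mathbf R}^{(0)}=(\mathbf I-\mathbf P)\mathbf y/\|(\mathbf I-\mathbf P)\mathbf y\|_2$, and for $b=1,\dots,B$ let $\hat{\mathbf R}^{(b)}=(\mathbf I-\mathbf P)\boldsymbol\zeta^{(b)}/\|(\mathbf I-\mathbf P)\boldsymbol\zeta^{(b)}\|_2$, where $\boldsymbol\zeta^{(1)},\dots,\boldsymbol\zeta^{(B)}$ are i.i.d. $\mathcal N_n(\mathbf 0,\mathbf I)$, independent of $\boldsymbol\varepsilon$. Let $f_1,\dots,f_L:\mathbb R^n\times\mathbb R^{n\times p_{\mathrm{all}}}\to\mathbb R$ be measurable functions, set $f^{(b)}_l=f_l(\hat{\mathbf R}^{(b)},\mathbf X_{\mathrm{all}})$, $\mathbf f^{(b)}=(f^{(b)}_l)_{l=1}^L$, and let $\mathbf f^{(-b)}$ denote the collection $\{\mathbf f^{(b')}:b'\in\{0,\dots,B\},b'\neq b\}$ arranged as an $L\times B$ matrix. Let $\tilde Q:\mathbb R^L\times\mathbb R^{L\times B}\to\mathbb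 R$ be measurable and invariant under permutations of the columns of its second argument, and set $\tilde Q_b=\tilde Q(\mathbf f^{(b)},\mathbf f^{(-b)})$ for $b=0,\dots,B$. Define $$Q=\frac{1}{B+1}\Big(1+\sum_{b=1}^B\mathbb 1_{\{\tilde Q_b\ge\tilde Q_0\}}\Big).$$ Then $\mathbb P(Q\le x)\le x$ for all $x\in[0,1]$.
   Context: The functions $f_l$ are called residual prediction functions; $\tilde Q_b$ measures how extreme the $b$-th curve is relative to the others (larger = more extreme). *)

theory Defs
  imports "HOL-Probability.Probability"
begin

definition orth_proj :: "'a::euclidean_space set \<Rightarrow> 'a \<Rightarrow> 'a" where
  "orth_proj S y = (THE u. u \<in> S \<and> (\<forall>w\<in>S. (y - u) \<bullet> w = 0))"

definition colproj :: "real^'p^'n \<Rightarrow> real^'n \<Rightarrow> real^'n" where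
  "colproj X y = orth_proj (span (columns X)) y"

definition norm_resid :: "real^'p^'n \<Rightarrow> real^'n \<Rightarrow> real^'n" where
  "norm_resid X y = (1 / norm (y - colproj X y)) *\<^sub>R (y - colproj X y)"

text \<open>Index map enumerating {0..B} minus {b} by k < B (column k of f^(-b)).\<close>
definition skip_idx :: "nat \<Rightarrow> nat \<Rightarrow> nat" where
  "skip_idx b k = (if k < b then k else Suc k)"

end

theory Submission
  imports Defs
begin

lemma orth_proj_unique:
  fixes S :: "'a::euclidean_space set"
  assumes "subspace S" "u \<in> S" "\<forall>w\<in>S. (y - u) \<bullet> w = 0"
  shows "orth_proj S y = u"
proof -
  have uniq: "v = u" if "v \<in> S" "\<forall>w\<in>S. (y - v) \<bullet> w = 0" for v
  proof -
    have d: "u - v \<in> S" using assms that by (simp add: subspace_diff)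
    have "(y - v) \<bullet> (u - v) - (y - u) \<bullet> (u - v) = 0" using d assms that by simp
    hence "(u - v) \<bullet> (u - v) = 0" using inner_diff_left[of "y - v" "y - u" "u - v"] by simp
    thus ?thesis by simp
  qed
  show ?thesis unfolding orth_proj_def
  proof (rule the_equality)
    show "u \<in> S \<and> (\<forall>w\<in>S. (y - u) \<bullet> w = 0)" using assms(2,3) by blast
  next
    fix v assume "v \<in> S \<and> (\<forall>w\<in>S. (y - v) \<bullet> w = 0)"
    thus "v = u" using uniq by blast
  qed
qed

lemma orth_proj_span:
  fixes S :: "'a::euclidean_space set"
  shows "orth_proj (span S) y \<in> span S \<and> (\<forall>w\<in>span S. (y - orth_proj (span S) y) \<bullet> w = 0)"
proof -
  obtain u z where u: "u \<in> span S" "\<And>w. w \<in> span S \<Longrightarrow> orthogonal z w" "y = u + z"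
    using orthogonal_subspace_decomp_exists by blast
  have "orth_proj (span S) y = u"
    by (rule orth_proj_unique) (use u in \<open>auto simp: orthogonal_def\<close>)
  thus ?thesis using u by (auto simp: orthogonal_def)
qed

lemma colproj_linear: "linear (colproj X)"
proof -
  let ?S = "span (columns X)"
  have P: "colproj X y \<in> ?S" "\<forall>w\<in>?S. (y - colproj X y) \<bullet> w = 0" for y
    using orth_proj_span[of "columns X" y] unfolding colproj_def by auto
  show ?thesis
  proof (rule linearI)
    fix a b
    show "colproj X (a + b) = colproj X a + colproj X b"
      unfolding colproj_def[of X "a+b"]
      apply (rule orth_proj_unique)
      using P[of a] P[of b] by (auto simp: span_add inner_diff_left inner_add_left algebra_simps)
  next
    fix c :: real and a
    show "colproj X (c *\<^sub>R a) = c *\<^sub>R colproj X a"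
      unfolding colproj_def[of X "c *\<^sub>R a"]
      apply (rule orth_proj_unique)
      using P[of a] by (auto simp: span_scale inner_diff_left algebra_simps)
  qed
qed

lemma colproj_shift:
  fixes X :: "real^'p^'n"
  assumes "s > 0"
  shows "norm_resid X (X *v beta + s *\<^sub>R e) = norm_resid X e"
proof -
  let ?S = "span (columns X)"
  have P: "colproj X y \<in> ?S" "\<forall>w\<in>?S. (y - colproj X y) \<bullet> w = 0" for y
    using orth_proj_span[of "columns X" y] unfolding colproj_def by auto
  have xb: "X *v beta \<in> ?S"
    by (rule matrix_vector_mult_in_columnspace)
  have c: "colproj X (X *v beta + s *\<^sub>R e) = X *v beta + s *\<^sub>R colproj X e"
    unfolding colproj_def[of X "X *v beta + s *\<^sub>R e"]
    apply (rule orth_proj_unique)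
    using P[of e] xb by (auto simp: span_add span_scale inner_diff_left algebra_simps)
  have d: "X *v beta + s *\<^sub>R e - colproj X (X *v beta + s *\<^sub>R e) = s *\<^sub>R (e - colproj X e)"
    unfolding c by (simp add: algebra_simps)
  show ?thesis unfolding norm_resid_def d using assms by auto
qed

lemma W_meas:
  fixes g :: "'x \<Rightarrow> 'n::finite \<Rightarrow> real"
  assumes "\<And>i. (\<lambda>v. g v i) \<in> borel_measurable N"
  shows "(\<lambda>v. (\<chi> i. g v i) :: real^'n) \<in> borel_measurable N"
proof (subst borel_measurable_euclidean_space, intro ballI)
  fix b :: "real^'n" assume "b \<in> Basis"
  then obtain j where b: "b = axis j 1" by (auto simp: Basis_vec_def)
  have "(\<lambda>v. (\<chi> i. g v i) \<bullet> b) = (\<lambda>v. g v j)"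
    unfolding b by (simp add: inner_axis)
  thus "(\<lambda>v. (\<chi> i. g v i) \<bullet> b) \<in> borel_measurable N" using assms by simp
qed

lemma norm_resid_meas: "norm_resid X \<in> borel_measurable borel"
proof -
  have "continuous_on UNIV (colproj X)"
    using colproj_linear linear_continuous_on linear_conv_bounded_linear by blast
  hence "colproj X \<in> borel_measurable borel" by (rule borel_measurable_continuous_onI)
  thus ?thesis unfolding norm_resid_def[abs_def] by measurable
qed
lemma rank_count:
  fixes a :: "nat \<Rightarrow> real"
  assumes "x \<ge> 0"
  shows "real (card {b\<in>{0..B}. (1 + real (card {c\<in>{0..B}-{b}. a c \<ge> a b})) / (real B + 1) \<le> x}) \<le> x * (real B + 1)"
proof (cases "{b\<in>{0..B}. (1 + real (card {c\<in>{0..B}-{b}. a c \<ge> a b})) / (real B + 1) \<le> x} = {}")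
  case True thus ?thesis using assms by (simp only: card.empty) simp
next
  case False
  define S where "S = {b\<in>{0..B}. (1 + real (card {c\<in>{0..B}-{b}. a c \<ge> a b})) / (real B + 1) \<le> x}"
  have fS: "finite S" unfolding S_def by simp
  have ne: "S \<noteq> {}" using False unfolding S_def by simp
  have "Min (a ` S) \<in> a ` S" using fS ne by simp
  then obtain bs where bs: "bs \<in> S" "a bs = Min (a ` S)" by auto
  have le: "a bs \<le> a b" if "b \<in> S" for b using bs fS that by simp
  have sub: "S - {bs} \<subseteq> {c\<in>{0..B}-{bs}. a c \<ge> a bs}" using le unfolding S_def by auto
  have "card (S - {bs}) \<le> card {c\<in>{0..B}-{bs}. a c \<ge> a bs}" by (rule card_mono) (use sub in auto)
  hence c1: "real (card S) \<le> 1 + real (card {c\<in>{0..B}-{bs}. a c \<ge> a bs})"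
    using bs(1) fS by (simp add: card_Diff_singleton)
  have "(1 + real (card {c\<in>{0..B}-{bs}. a c \<ge> a bs})) / (real B + 1) \<le> x"
    using bs(1) unfolding S_def by simp
  hence "1 + real (card {c\<in>{0..B}-{bs}. a c \<ge> a bs}) \<le> x * (real B + 1)"
    by (simp add: divide_le_eq add_pos_nonneg)
  thus ?thesis using c1 unfolding S_def[symmetric] by linarith
qed

definition unskip :: "nat \<Rightarrow> nat \<Rightarrow> nat" where
  "unskip c j = (if j < c then j else j - 1)"

lemma skip_in: "k < B \<Longrightarrow> skip_idx b k \<in> {0..B} - {b}"
  by (auto simp: skip_idx_def)

lemma skip_idx_inj: "skip_idx b k = skip_idx b k' \<Longrightarrow> k = k'"
  by (auto simp: skip_idx_def split: if_splits)

lemma unskip_props: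
  assumes "c \<le> B" "j \<in> {0..B} - {c}"
  shows "unskip c j < B" "skip_idx c (unskip c j) = j"
  using assms by (auto simp: unskip_def skip_idx_def)

lemma rho_perm:
  assumes pi: "\<pi> permutes {0..B}" and b: "b \<le> B"
  defines "\<rho> \<equiv> (\<lambda>k. if k < B then unskip (\<pi> b) (\<pi> (skip_idx b k)) else k)"
  shows "\<rho> permutes {..<B}" "\<And>k. k < B \<Longrightarrow> skip_idx (\<pi> b) (\<rho> k) = \<pi> (skip_idx b k)"
proof -
  have pib: "\<pi> b \<le> B" using permutes_in_image[OF pi, of b] b by simp
  have inm: "\<pi> (skip_idx b k) \<in> {0..B} - {\<pi> b}" if "k < B" for k
  proof -
    have "skip_idx b k \<in> {0..B} - {b}" using skip_in that by blast
    moreover have "\<pi> (skip_idx b k) \<noteq> \<pi> b" using calculation pi by (simp add: permutes_inj inj_eq)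
    ultimately show ?thesis using permutes_in_image[OF pi, of "skip_idx b k"] by simp
  qed
  show eq: "skip_idx (\<pi> b) (\<rho> k) = \<pi> (skip_idx b k)" if "k < B" for k
    using unskip_props(2)[OF pib inm[OF that]] that by (simp add: \<rho>_def)
  have into: "\<rho> ` {..<B} \<subseteq> {..<B}"
    using unskip_props(1)[OF pib inm] by (auto simp: \<rho>_def)
  have inj: "inj_on \<rho> {..<B}"
  proof (rule inj_onI)
    fix k k' assume k: "k \<in> {..<B}" "k' \<in> {..<B}" "\<rho> k = \<rho> k'"
    hence "\<pi> (skip_idx b k) = \<pi> (skip_idx b k')" using eq by (metis lessThan_iff)
    hence "skip_idx b k = skip_idx b k'" using pi by (simp add: permutes_inj inj_eq)
    thus "k = k'" by (rule skip_idx_inj)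
  qed
  have "\<rho> ` {..<B} = {..<B}" using into inj by (simp add: endo_inj_surj)
  hence "bij_betw \<rho> {..<B} {..<B}" using inj by (simp add: bij_betw_def)
  thus "\<rho> permutes {..<B}" by (rule bij_imp_permutes) (simp add: \<rho>_def)
qed

definition Gf where
  "Gf L B f Xall Qt Rf b = Qt (\<lambda>l\<in>{..<L}. f l (Rf b) Xall) (\<lambda>l\<in>{..<L}. \<lambda>k\<in>{..<B}. f l (Rf (skip_idx b k)) Xall)"

lemma Gf_perm:
  assumes inv: "\<forall>v Mat \<pi>. \<pi> permutes {..<B} \<longrightarrow>
           Qt v (\<lambda>l\<in>{..<L}. \<lambda>k\<in>{..<B}. Mat l (\<pi> k)) = Qt v (\<lambda>l\<in>{..<L}. \<lambda>k\<in>{..<B}. Mat l k)"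
    and pi: "\<pi> permutes {0..B}" and b: "b \<le> B"
    and R: "\<And>c. c \<le> B \<Longrightarrow> Rf' c = Rf (\<pi> c)"
  shows "Gf L B f Xall Qt Rf' b = Gf L B f Xall Qt Rf (\<pi> b)"
proof -
  define \<rho> where "\<rho> = (\<lambda>k. if k < B then unskip (\<pi> b) (\<pi> (skip_idx b k)) else k)"
  have rp: "\<rho> permutes {..<B}" and eq: "\<And>k. k < B \<Longrightarrow> skip_idx (\<pi> b) (\<rho> k) = \<pi> (skip_idx b k)"
    using rho_perm[OF pi b] unfolding \<rho>_def by auto
  define Mat where "Mat = (\<lambda>l k. f l (Rf (skip_idx (\<pi> b) k)) Xall)"
  have sk: "skip_idx b k \<le> B" if "k < B" for k using skip_in[OF that, of b] by simp
  have fm: "(\<lambda>l\<in>{..<L}. \<lambda>k\<in>{..<B}. f l (Rf' (skip_idx b k)) Xall) = (\<lambda>l\<in>{..<L}. \<lambda>k\<in>{..<B}. Mat l (\<rho> k))"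
    by (intro restrict_ext) (simp add: Mat_def eq R sk)
  have fv: "(\<lambda>l\<in>{..<L}. f l (Rf' b) Xall) = (\<lambda>l\<in>{..<L}. f l (Rf (\<pi> b)) Xall)"
    using R[OF b] by simp
  have "Qt (\<lambda>l\<in>{..<L}. f l (Rf (\<pi> b)) Xall) (\<lambda>l\<in>{..<L}. \<lambda>k\<in>{..<B}. Mat l (\<rho> k))
     = Qt (\<lambda>l\<in>{..<L}. f l (Rf (\<pi> b)) Xall) (\<lambda>l\<in>{..<L}. \<lambda>k\<in>{..<B}. Mat l k)"
    using inv rp by blast
  thus ?thesis unfolding Gf_def fm fv unfolding Mat_def .
qed

definition cntf :: "nat \<Rightarrow> (nat \<Rightarrow> real) \<Rightarrow> nat \<Rightarrow> nat" where
  "cntf B a b = card {c\<in>{0..B}-{b}. a c \<ge> a b}"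

lemma cntf_perm:
  assumes pi: "\<pi> permutes {0..B}" and b: "b \<le> B"
    and A: "\<And>c. c \<le> B \<Longrightarrow> a' c = a (\<pi> c)"
  shows "cntf B a' b = cntf B a (\<pi> b)"
proof -
  have img: "\<pi> ` {c\<in>{0..B}-{b}. a' c \<ge> a' b} = {d\<in>{0..B}-{\<pi> b}. a d \<ge> a (\<pi> b)}"
  proof (intro equalityI subsetI)
    fix d assume "d \<in> \<pi> ` {c\<in>{0..B}-{b}. a' c \<ge> a' b}"
    then obtain c where c: "c \<in> {0..B}-{b}" "a' c \<ge> a' b" "d = \<pi> c" by auto
    have "\<pi> c \<in> {0..B}" using permutes_in_image[OF pi] c by auto
    moreover have "\<pi> c \<noteq> \<pi> b" using c pi by (simp add: permutes_inj inj_eq)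
    ultimately show "d \<in> {d\<in>{0..B}-{\<pi> b}. a d \<ge> a (\<pi> b)}" using c A b by auto
  next
    fix d assume d: "d \<in> {d\<in>{0..B}-{\<pi> b}. a d \<ge> a (\<pi> b)}"
    have "d \<in> \<pi> ` {0..B}" using d permutes_image[OF pi] by simp
    then obtain c where c: "c \<in> {0..B}" "d = \<pi> c" by blast
    have "c \<noteq> b" using c d by auto
    thus "d \<in> \<pi> ` {c\<in>{0..B}-{b}. a' c \<ge> a' b}" using c d A b by auto
  qed
  have "inj_on \<pi> {c\<in>{0..B}-{b}. a' c \<ge> a' b}" using permutes_inj[OF pi] by (rule inj_on_subset) simp
  from card_image[OF this] show ?thesis unfolding cntf_def img by simp
qed

lemma Gf_meas:
  fixes f :: "nat \<Rightarrow> real^'n \<Rightarrow> real^'q^'n \<Rightarrow> real" and Rf :: "nat \<Rightarrow> 'x \<Rightarrow> real^'n"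
    and Qt :: "(nat \<Rightarrow> real) \<Rightarrow> (nat \<Rightarrow> nat \<Rightarrow> real) \<Rightarrow> real"
  assumes fmeas: "\<forall>l<L. (\<lambda>z. f l (fst z) (snd z)) \<in> borel_measurable borel"
    and Qmeas: "(\<lambda>z. Qt (fst z) (snd z)) \<in> borel_measurable
           (PiM {..<L} (\<lambda>_. borel) \<Otimes>\<^sub>M PiM {..<L} (\<lambda>_. PiM {..<B} (\<lambda>_. borel)))"
    and Rm: "\<And>c. c \<le> B \<Longrightarrow> Rf c \<in> borel_measurable N"
    and b: "b \<le> B"
  shows "(\<lambda>v. Gf L B f Xall Qt (\<lambda>c. Rf c v) b) \<in> borel_measurable N"
proof -
  have fR: "(\<lambda>v. f l (Rf c v) Xall) \<in> borel_measurable N" if "l < L" "c \<le> B" for l c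
  proof -
    have "(\<lambda>v. (Rf c v, Xall)) \<in> measurable N (borel \<Otimes>\<^sub>M borel)"
      using Rm[OF that(2)] by measurable
    hence p: "(\<lambda>v. (Rf c v, Xall)) \<in> measurable N borel" by (simp add: borel_prod)
    have "(\<lambda>z. f l (fst z) (snd z)) \<in> borel_measurable borel" using fmeas that(1) by blast
    from measurable_compose[OF p this] show ?thesis by simp
  qed
  have sk: "skip_idx b k \<le> B" if "k < B" for k using skip_in[OF that, of b] by simp
  have m1: "(\<lambda>v. \<lambda>l\<in>{..<L}. f l (Rf b v) Xall) \<in> measurable N (PiM {..<L} (\<lambda>_. borel))"
    by (rule measurable_restrict) (use fR b in auto)
  have m2: "(\<lambda>v. \<lambda>l\<in>{..<L}. \<lambda>k\<in>{..<B}. f l (Rf (skip_idx b k) v) Xall) \<in> measurable N (PiM {..<L} (\<lambda>_. PiM {..<B} (\<lambda>_. borel)))"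
    by (intro measurable_restrict) (use fR sk in auto)
  have "(\<lambda>v. ((\<lambda>l\<in>{..<L}. f l (Rf b v) Xall), (\<lambda>l\<in>{..<L}. \<lambda>k\<in>{..<B}. f l (Rf (skip_idx b k) v) Xall)))
     \<in> measurable N (PiM {..<L} (\<lambda>_. borel) \<Otimes>\<^sub>M PiM {..<L} (\<lambda>_. PiM {..<B} (\<lambda>_. borel)))"
    using m1 m2 by (rule measurable_Pair)
  from measurable_compose[OF this Qmeas] show ?thesis unfolding Gf_def by simp
qed

lemma cntf_meas:
  fixes h :: "nat \<Rightarrow> 'x \<Rightarrow> real"
  assumes "\<And>c. c \<le> B \<Longrightarrow> h c \<in> borel_measurable N" "b \<le> B"
  shows "(\<lambda>v. real (cntf B (\<lambda>c. h c v) b)) \<in> borel_measurable N"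
proof -
  have eq: "real (cntf B (\<lambda>c. h c v) b) = (\<Sum>c\<in>{0..B}-{b}. if h b v \<le> h c v then 1 else 0)" for v
    unfolding cntf_def by (simp add: sum.If_cases Int_def conj_commute conj_left_commute)
  show ?thesis unfolding eq
  proof (intro borel_measurable_sum)
    fix c assume "c \<in> {0..B} - {b}"
    hence [measurable]: "h c \<in> borel_measurable N" "h b \<in> borel_measurable N" using assms by auto
    show "(\<lambda>v. if h b v \<le> h c v then 1 else 0 :: real) \<in> borel_measurable N" by measurable
  qed
qed

lemma exch_bound:
  fixes Qr :: "nat \<Rightarrow> ((nat \<times> 'n) \<Rightarrow> real) \<Rightarrow> real" and D :: "real measure"
  assumes D: "prob_space D"
    and ND: "ND = PiM ({0..B} \<times> (UNIV :: 'n set)) (\<lambda>_. D)"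
    and meas: "\<And>b. b \<le> B \<Longrightarrow> Qr b \<in> borel_measurable ND"
    and swp: "\<And>b v. b \<le> B \<Longrightarrow> Qr b v = Qr 0 (\<lambda>j\<in>{0..B} \<times> (UNIV :: 'n set). v (Transposition.transpose 0 b (fst j), snd j))"
    and bound: "\<And>v. real (card {b\<in>{0..B}. Qr b v \<le> x}) \<le> x * (real B + 1)"
  shows "measure ND {v\<in>space ND. Qr 0 v \<le> x} \<le> x"
proof -
  define I where "I = {0..B} \<times> (UNIV :: 'n set)"
  interpret P: prob_space ND unfolding ND using D by (intro prob_space_PiM) auto
  define A where "A b = {v\<in>space ND. Qr b v \<le> x}" for b
  have As: "A b \<in> sets ND" if "b \<le> B" for b
    unfolding A_def using meas[OF that] by measurable
  have eqA: "measure ND (A b) = measure ND (A 0)" if b: "b \<le> B" for b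
  proof -
    define g where "g = (\<lambda>j::nat\<times>'n. (Transposition.transpose 0 b (fst j), snd j))"
    define \<phi> where "\<phi> = (\<lambda>v. \<lambda>j\<in>I. v (g j) :: real)"
    have tp: "Transposition.transpose 0 b permutes {0..B}" using b by (intro permutes_swap_id) auto
    have ginj: "inj_on g I" unfolding g_def
      by (rule inj_onI) (auto simp: prod_eq_iff dest: permutes_inj[OF tp, THEN injD])
    have gI: "g \<in> I \<rightarrow> I" unfolding g_def I_def using permutes_in_image[OF tp] by auto
    have dist: "distr ND ND \<phi> = ND"
      unfolding ND \<phi>_def I_def[symmetric] using distr_PiM_reindex[of I "\<lambda>_. D" g I, OF D ginj gI] by simp
    have phim: "\<phi> \<in> measurable ND ND"
      unfolding ND \<phi>_def I_def[symmetric]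
      by (intro measurable_restrict measurable_component_singleton) (use gI in auto)
    have "A b = \<phi> -` A 0 \<inter> space ND"
      using measurable_space[OF phim] swp[OF b] unfolding A_def \<phi>_def g_def I_def by auto
    hence "measure ND (A b) = measure (distr ND ND \<phi>) (A 0)"
      using As[of 0] phim by (simp add: measure_distr)
    thus ?thesis unfolding dist .
  qed
  have int: "integrable ND (indicator (A b) :: _ \<Rightarrow> real)" if "b \<le> B" for b
    using As[OF that] by (intro integrable_real_indicator) (auto simp: less_top[symmetric])
  have "(\<Sum>b\<in>{0..B}. measure ND (A b)) = (\<Sum>b\<in>{0..B}. measure ND (A 0))"
    by (rule sum.cong[OF refl]) (rule eqA, simp)
  hence "(real B + 1) * measure ND (A 0) = (\<Sum>b\<in>{0..B}. measure ND (A b))"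
    by (simp add: algebra_simps)
  also have "\<dots> = (\<Sum>b\<in>{0..B}. integral\<^sup>L ND (indicator (A b) :: _ \<Rightarrow> real))"
    using As by (intro sum.cong) (auto simp: Int_absorb2 sets.sets_into_space)
  also have "\<dots> = integral\<^sup>L ND (\<lambda>v. \<Sum>b\<in>{0..B}. indicator (A b) v :: real)"
    using int by (intro Bochner_Integration.integral_sum[symmetric]) auto
  also have "\<dots> \<le> integral\<^sup>L ND (\<lambda>v. x * (real B + 1))"
  proof (rule integral_mono)
    show "integrable ND (\<lambda>v. \<Sum>b\<in>{0..B}. indicator (A b) v :: real)" using int by auto
    show "integrable ND (\<lambda>v. x * (real B + 1))" by simp
    fix v assume v: "v \<in> space ND"
    have "(\<Sum>b\<in>{0..B}. indicator (A b) v :: real) = real (card {b\<in>{0..B}. Qr b v \<le> x})"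
      using v by (simp add: indicator_def A_def sum.If_cases Int_def)
    thus "(\<Sum>b\<in>{0..B}. indicator (A b) v :: real) \<le> x * (real B + 1)" using bound by simp
  qed
  also have "\<dots> = x * (real B + 1)" by (simp add: P.prob_space)
  finally show ?thesis unfolding A_def by (simp add: mult.commute)
qed

theorem proposition1:
  fixes M :: "'w measure"
    and X :: "real^'p^'n" and Xall :: "real^'q^'n"
    and beta :: "real^'p" and sigma :: real
    and eps :: "'w \<Rightarrow> real^'n" and zeta :: "nat \<Rightarrow> 'w \<Rightarrow> real^'n"
    and B L :: nat
    and f :: "nat \<Rightarrow> real^'n \<Rightarrow> real^'q^'n \<Rightarrow> real"
    and Qt :: "(nat \<Rightarrow> real) \<Rightarrow> (nat \<Rightarrow> nat \<Rightarrow> real) \<Rightarrow> real"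
    and x :: real
  assumes "prob_space M"
    and "CARD('p) < CARD('n)"
    and "sigma > 0"
    and "\<forall>i. distributed M lborel (\<lambda>\<omega>. eps \<omega> $ i) std_normal_density"
    and "\<forall>b\<in>{1..B}. \<forall>i. distributed M lborel (\<lambda>\<omega>. zeta b \<omega> $ i) std_normal_density"
    and "prob_space.indep_vars M (\<lambda>_. borel)
           (\<lambda>(b, i) \<omega>. (if b = 0 then eps \<omega> else zeta b \<omega>) $ i) ({0..B} \<times> UNIV)"
    and "\<forall>l<L. (\<lambda>z. f l (fst z) (snd z)) \<in> borel_measurable borel"
    and "(\<lambda>z. Qt (fst z) (snd z)) \<in> borel_measurable
           (PiM {..<L} (\<lambda>_. borel) \<Otimes>\<^sub>M PiM {..<L} (\<lambda>_. PiM {..<B} (\<lambda>_. borel)))"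
    and "\<forall>v Mat \<pi>. \<pi> permutes {..<B} \<longrightarrow>
           Qt v (\<lambda>l\<in>{..<L}. \<lambda>k\<in>{..<B}. Mat l (\<pi> k)) = Qt v (\<lambda>l\<in>{..<L}. \<lambda>k\<in>{..<B}. Mat l k)"
    and "x \<in> {0..1}"
  shows "let y = (\<lambda>\<omega>. X *v beta + sigma *\<^sub>R eps \<omega>);
             R = (\<lambda>b \<omega>. if b = 0 then norm_resid X (y \<omega>) else norm_resid X (zeta b \<omega>));
             fv = (\<lambda>b \<omega>. \<lambda>l\<in>{..<L}. f l (R b \<omega>) Xall);
             fm = (\<lambda>b \<omega>. \<lambda>l\<in>{..<L}. \<lambda>k\<in>{..<B}. f l (R (skip_idx b k) \<omega>) Xall);
             Qb = (\<lambda>b \<omega>. Qt (fv b \<omega>) (fm b \<omega>));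
             Q = (\<lambda>\<omega>. (1 + real (card {b \<in> {1..B}. Qb b \<omega> \<ge> Qb 0 \<omega>})) / (real B + 1))
         in measure M {\<omega> \<in> space M. Q \<omega> \<le> x} \<le> x"
proof -
  interpret prob_space M by fact
  define I where "I = {0..B} \<times> (UNIV :: 'n set)"
  define Xf where "Xf = (\<lambda>(b, i) \<omega>. (if b = 0 then eps \<omega> else zeta b \<omega>) $ i)"
  define V where "V = (\<lambda>\<omega>. \<lambda>j\<in>I. Xf j \<omega>)"
  define D where "D = density lborel std_normal_density"
  define Npi where "Npi = PiM I (\<lambda>_. borel :: real measure)"
  define ND where "ND = PiM I (\<lambda>_. D)"
  define Rv :: "nat \<Rightarrow> (nat \<times> 'n \<Rightarrow> real) \<Rightarrow> real^'n" where "Rv = (\<lambda>c v. norm_resid X ((\<chi> i. v (c, i)) :: real^'n))"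
  define Gv where "Gv = (\<lambda>c v. Gf L B f Xall Qt (\<lambda>c'. Rv c' v) c)"
  define Qr where "Qr = (\<lambda>b v. (1 + real (cntf B (\<lambda>c. Gv c v) b)) / (real B + 1))"
  have ind: "indep_vars (\<lambda>_. borel) Xf I" using assms(6) unfolding I_def Xf_def .
  have rv: "random_variable borel (Xf j)" if "j \<in> I" for j
    using ind that unfolding indep_vars_def by blast
  have InE: "I \<noteq> {}" unfolding I_def by auto
  have dPi: "distr M Npi V = PiM I (\<lambda>j. distr M borel (Xf j))"
    using indep_vars_iff_distr_eq_PiM'[where M'="\<lambda>_. borel" and X=Xf and I=I, OF InE rv] ind
    unfolding Npi_def V_def by auto
  have dj: "distr M borel (Xf j) = D" if "j \<in> I" for j
  proof -
    obtain c i where j: "j = (c, i)" by (cases j)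
    have c: "c \<le> B" using that j unfolding I_def by auto
    have "distributed M lborel (Xf j) std_normal_density"
    proof (cases "c = 0")
      case True thus ?thesis using assms(4) unfolding j Xf_def by simp
    next
      case False
      hence "c \<in> {1..B}" using c by auto
      thus ?thesis using assms(5) False unfolding j Xf_def by simp
    qed
    hence "distr M lborel (Xf j) = D" unfolding D_def by (rule distributed_distr_eq_density)
    moreover have "distr M borel (Xf j) = distr M lborel (Xf j)" by (rule distr_cong) auto
    ultimately show ?thesis by simp
  qed
  have dND: "distr M Npi V = ND"
    unfolding dPi ND_def using dj by (intro PiM_cong) auto
  have Dp: "prob_space D" unfolding D_def using prob_space_normal_density[of 1 0] by simp
  have setsND: "sets ND = sets Npi" unfolding ND_def Npi_def D_def
    by (intro sets_PiM_cong) auto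
  have spaceND: "space ND = space Npi" using sets_eq_imp_space_eq[OF setsND] .
  have Vm: "V \<in> measurable M Npi" unfolding V_def Npi_def
    by (intro measurable_restrict) (use rv in auto)
  have Rvm: "Rv c \<in> borel_measurable Npi" if "c \<le> B" for c
  proof -
    have "(\<lambda>v. (\<chi> i. v (c, i)) :: real^'n) \<in> borel_measurable Npi"
      unfolding Npi_def using that
      by (intro W_meas measurable_component_singleton) (auto simp: I_def)
    from measurable_compose[OF this norm_resid_meas] show ?thesis unfolding Rv_def .
  qed
  have Gvm: "Gv c \<in> borel_measurable Npi" if "c \<le> B" for c
    unfolding Gv_def using Gf_meas[OF assms(7) assms(8) Rvm that] by simp
  have QrmN: "Qr b \<in> borel_measurable Npi" if "b \<le> B" for b
  proof -
    have [measurable]: "(\<lambda>v. real (cntf B (\<lambda>c. Gv c v) b)) \<in> borel_measurable Npi"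
      using cntf_meas[of B Gv Npi b] Gvm that by simp
    show "Qr b \<in> borel_measurable Npi" unfolding Qr_def by measurable
  qed
  have Qrm: "Qr b \<in> borel_measurable ND" if "b \<le> B" for b
    using QrmN[OF that] unfolding measurable_cong_sets[OF setsND refl] .
  have swp: "Qr b v = Qr 0 (\<lambda>j\<in>{0..B} \<times> (UNIV :: 'n set). v (Transposition.transpose 0 b (fst j), snd j))"
    if b: "b \<le> B" for b v
  proof -
    let ?t = "Transposition.transpose 0 b"
    define w where "w = (\<lambda>j\<in>{0..B} \<times> (UNIV :: 'n set). v (?t (fst j), snd j))"
    have tp: "?t permutes {0..B}" using b by (intro permutes_swap_id) auto
    have tB: "?t c \<le> B" if "c \<le> B" for c using permutes_in_image[OF tp, of c] that by simp
    have R: "Rv c w = Rv (?t c) v" if "c \<le> B" for c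
      unfolding Rv_def w_def using that by simp
    have G: "Gv c w = Gv (?t c) v" if "c \<le> B" for c
      unfolding Gv_def using Gf_perm[OF assms(9) tp that, of "\<lambda>c'. Rv c' w" "\<lambda>c'. Rv c' v"] R by simp
    have "cntf B (\<lambda>c. Gv c w) 0 = cntf B (\<lambda>c. Gv c v) (?t 0)"
      using cntf_perm[OF tp, of 0 "\<lambda>c. Gv c w" "\<lambda>c. Gv c v"] G by simp
    thus ?thesis unfolding Qr_def w_def[symmetric] by simp
  qed
  have bound: "real (card {b\<in>{0..B}. Qr b v \<le> x}) \<le> x * (real B + 1)" for v
    using rank_count[where x=x and a="\<lambda>c. Gv c v" and B=B] assms(10) unfolding Qr_def cntf_def by simp
  have main: "measure ND {v\<in>space ND. Qr 0 v \<le> x} \<le> x"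
    by (rule exch_bound[OF Dp ND_def[unfolded I_def] Qrm swp bound])
  have Asets: "{v\<in>space Npi. Qr 0 v \<le> x} \<in> sets Npi"
    using QrmN[of 0] by measurable
  have mM: "measure M {\<omega>\<in>space M. Qr 0 (V \<omega>) \<le> x} \<le> x"
  proof -
    have "measure M {\<omega>\<in>space M. Qr 0 (V \<omega>) \<le> x} = measure (distr M Npi V) {v\<in>space Npi. Qr 0 v \<le> x}"
      using Asets Vm measurable_space[OF Vm] by (subst measure_distr) (auto intro!: arg_cong[where f="measure M"])
    thus ?thesis using main unfolding dND spaceND by simp
  qed
  define y where "y = (\<lambda>\<omega>. X *v beta + sigma *\<^sub>R eps \<omega>)"
  define R where "R = (\<lambda>b \<omega>. if b = 0 then norm_resid X (y \<omega>) else norm_resid X (zeta b \<omega>))"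
  define Qb where "Qb = (\<lambda>b \<omega>. Qt ((\<lambda>b \<omega>. \<lambda>l\<in>{..<L}. f l (R b \<omega>) Xall) b \<omega>) ((\<lambda>b \<omega>. \<lambda>l\<in>{..<L}. \<lambda>k\<in>{..<B}. f l (R (skip_idx b k) \<omega>) Xall) b \<omega>))"
  have RV: "R c \<omega> = Rv c (V \<omega>)" if "c \<le> B" for c \<omega>
  proof -
    have "(\<chi> i. V \<omega> (c, i)) = (if c = 0 then eps \<omega> else zeta c \<omega>)"
      using that unfolding V_def Xf_def I_def by (simp add: vec_eq_iff)
    thus ?thesis unfolding R_def Rv_def y_def using colproj_shift[OF assms(3), of X beta "eps \<omega>"] by simp
  qed
  have QbG: "Qb c \<omega> = Gv c (V \<omega>)" if "c \<le> B" for c \<omega>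
  proof -
    have sk: "skip_idx c k \<le> B" if "k < B" for k using skip_in[OF that, of c] by simp
    show ?thesis unfolding Qb_def Gv_def Gf_def using RV[OF that] RV[OF sk]
      by (intro arg_cong2[where f=Qt] restrict_ext) auto
  qed
  have Qeq: "(1 + real (card {b \<in> {1..B}. Qb b \<omega> \<ge> Qb 0 \<omega>})) / (real B + 1) = Qr 0 (V \<omega>)" for \<omega>
  proof -
    have "{b \<in> {1..B}. Qb b \<omega> \<ge> Qb 0 \<omega>} = {c\<in>{0..B}-{0}. Gv c (V \<omega>) \<ge> Gv 0 (V \<omega>)}"
      using QbG by auto
    thus ?thesis unfolding Qr_def cntf_def by simp
  qed
  show ?thesis
    unfolding Let_def Qeq[unfolded Qb_def R_def y_def] using mM .
qed

end
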